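(* Let $M\ge2$ and consider a hierarchical system as described in the context. For $l\in\{1,\dots,M\}$ let $L^{(l)}_e=K^{(l)}L^{(l)}_D$. Then $\lambda(L^{(l)}_e)=\lambda(L^{(l)})\subset\mathbb{R}$; in particular $\lambda(L^{(l)})$ is the same for every choice of the stochastic row vectors $C^{(m)}_p$. Moreover, with $L=\sum_{l=1}^ML^{(l)}$, \[ \lambda(L)=\{0\}\cup\big(\lambda(L^{(1)}_e)\setminus\{0\}\big)\cup\cdots\cup\big(\lambda(L^{(M)}_e)\setminus\{0\}\big). \]
   Context: Hierarchical structure. Fix an integer $M\ge 2$ and positive integers $N^{(1)},\dots,N^{(M)}$; set $N^{(M+1)}:=1$. For each $l\in\{1,\dots,M\}$ the $N^{(l)}$ nodes of layer $l$ are partitioned into $N^{(l+1)}$ groups $G^{(l)}_1,\dots,G^{(l)}_{N^{(l+1)}}$ of sizes $k^{(l)}_p\ge1$ (so $\sum_pk^{(l)}_p=N^{(l)}$), numbered consecutively: group $G^{(l)}_p$ consists of nodes $\sum_{m<p}k^{(l)}_m+1,\dots,\sum_{m\le p}k^{(l)}_m$ of layer $l$. Each group $G^{(l)}_p$ carries a connected undirected graph with binary adjacency matrix; $L^{(l)}_p$ is its Laplacian (degree matrix minus adjacency matrix), and $L^{(l)}_D=\mathrm{diag}(L^{(l)}_1,\dots,L^{(l)}_{N^{(l+1)}})$ (block diagonal). Weights: positive constants $a_1,\dots,a_{N^{(1)}}$; $a^{(1)}_i=a_i$, $a^{(l+1)}_p=\sum_{i\in G^{(l)}_p}a^{(l)}_i$;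 $K^{(l)}=\mathrm{diag}(a^{(l)}_1,\dots,a^{(l)}_{N^{(l)}})^{-1}$. For $l=1,\dots,M-1$: $B^{(l)}=\mathrm{diag}(\mathbf{1}_{k^{(l)}_1},\dots,\mathbf{1}_{k^{(l)}_{N^{(l+1)}}})\in\mathbb{R}^{N^{(l)}\times N^{(l+1)}}$ ($\mathbf 1_k$ all-ones column vector), $C^{(l)}=\mathrm{diag}(C^{(l)}_1,\dots,C^{(l)}_{N^{(l+1)}})\in\mathbb{R}^{N^{(l+1)}\times N^{(l)}}$ with each $C^{(l)}_p\in\mathbb{R}^{1\times k^{(l)}_p}$ having nonnegative entries summing to $1$. $L^{(1)}=K^{(1)}L^{(1)}_D$ and $L^{(l)}=B^{(1)}\cdots B^{(l-1)}K^{(l)}L^{(l)}_DC^{(l-1)}\cdots C^{(1)}$ for $l=2,\dots,M$. $\lambda(A)$ is the set of (distinct) eigenvalues of $A$. *)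

theory Defs
  imports Complex_Main "Jordan_Normal_Form.Char_Poly"
begin

text \<open>Layers are numbered 1..M. Nodes of layer l are 0-indexed:
  0..<N l. The groups of layer l are 0-indexed: p < N (Suc l); group p has
  size k l p and consists of nodes goff k l p ..< goff k l p + k l p.
  E l p i j is the (binary, symmetric, loop-free) adjacency relation of the
  graph carried by group p of layer l, on local vertices 0..<k l p.
  c l p j (j < k l p) is the j-th entry of the stochastic row vector C^(l)_p.
  a i (i < N 1) are the positive weights.\<close>

definition goff :: "(nat \<Rightarrow> nat \<Rightarrow> nat) \<Rightarrow> nat \<Rightarrow> nat \<Rightarrow> nat" where
  "goff k l p = (\<Sum>m<p. k l m)"

definition in_group :: "(nat \<Rightarrow> nat \<Rightarrow> nat) \<Rightarrow> nat \<Rightarrow> nat \<Rightarrow> nat \<Rightarrow> bool" where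
  "in_group k l p i \<longleftrightarrow> goff k l p \<le> i \<and> i < goff k l p + k l p"

definition graph_connected :: "nat \<Rightarrow> (nat \<Rightarrow> nat \<Rightarrow> bool) \<Rightarrow> bool" where
  "graph_connected n E \<longleftrightarrow>
     (\<forall>i<n. \<forall>j<n. (\<lambda>x y. x < n \<and> y < n \<and> E x y)\<^sup>*\<^sup>* i j)"

definition lap_entry :: "nat \<Rightarrow> (nat \<Rightarrow> nat \<Rightarrow> bool) \<Rightarrow> nat \<Rightarrow> nat \<Rightarrow> real" where
  "lap_entry n E i j =
     (if i = j then real (card {m. m < n \<and> E i m}) else if E i j then -1 else 0)"

fun aw :: "(nat \<Rightarrow> nat \<Rightarrow> nat) \<Rightarrow> (nat \<Rightarrow> real) \<Rightarrow> nat \<Rightarrow> nat \<Rightarrow> real" where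
  "aw k a 0 i = 0"
| "aw k a (Suc 0) i = a i"
| "aw k a (Suc (Suc l)) p = (\<Sum>i\<in>{goff k (Suc l) p..<goff k (Suc l) p + k (Suc l) p}. aw k a (Suc l) i)"

definition LD :: "(nat \<Rightarrow> nat) \<Rightarrow> (nat \<Rightarrow> nat \<Rightarrow> nat) \<Rightarrow> (nat \<Rightarrow> nat \<Rightarrow> nat \<Rightarrow> nat \<Rightarrow> bool)
                   \<Rightarrow> nat \<Rightarrow> real mat" where
  "LD N k E l = mat (N l) (N l) (\<lambda>(i, j).
      if (\<exists>p<N (Suc l). in_group k l p i \<and> in_group k l p j)
      then (let p = (THE p. p < N (Suc l) \<and> in_group k l p i)
            in lap_entry (k l p) (E l p) (i - goff k l p) (j - goff k l p))
      else 0)"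

definition Kmat :: "(nat \<Rightarrow> nat) \<Rightarrow> (nat \<Rightarrow> nat \<Rightarrow> nat) \<Rightarrow> (nat \<Rightarrow> real) \<Rightarrow> nat \<Rightarrow> real mat" where
  "Kmat N k a l = mat (N l) (N l) (\<lambda>(i, j). if i = j then 1 / aw k a l i else 0)"

definition Bmat :: "(nat \<Rightarrow> nat) \<Rightarrow> (nat \<Rightarrow> nat \<Rightarrow> nat) \<Rightarrow> nat \<Rightarrow> real mat" where
  "Bmat N k l = mat (N l) (N (Suc l)) (\<lambda>(i, p). if in_group k l p i then 1 else 0)"

definition Cmat :: "(nat \<Rightarrow> nat) \<Rightarrow> (nat \<Rightarrow> nat \<Rightarrow> nat) \<Rightarrow> (nat \<Rightarrow> nat \<Rightarrow> nat \<Rightarrow> real) \<Rightarrow> nat \<Rightarrow> real mat" where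
  "Cmat N k c l = mat (N (Suc l)) (N l) (\<lambda>(p, i). if in_group k l p i then c l p (i - goff k l p) else 0)"

fun Bprod :: "(nat \<Rightarrow> nat) \<Rightarrow> (nat \<Rightarrow> nat \<Rightarrow> nat) \<Rightarrow> nat \<Rightarrow> real mat" where
  "Bprod N k 0 = 1\<^sub>m (N 1)"
| "Bprod N k (Suc 0) = 1\<^sub>m (N 1)"
| "Bprod N k (Suc (Suc l)) = Bprod N k (Suc l) * Bmat N k (Suc l)"

fun Cprod :: "(nat \<Rightarrow> nat) \<Rightarrow> (nat \<Rightarrow> nat \<Rightarrow> nat) \<Rightarrow> (nat \<Rightarrow> nat \<Rightarrow> nat \<Rightarrow> real) \<Rightarrow> nat \<Rightarrow> real mat" where
  "Cprod N k c 0 = 1\<^sub>m (N 1)"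
| "Cprod N k c (Suc 0) = 1\<^sub>m (N 1)"
| "Cprod N k c (Suc (Suc l)) = Cmat N k c (Suc l) * Cprod N k c (Suc l)"

definition Le :: "(nat \<Rightarrow> nat) \<Rightarrow> (nat \<Rightarrow> nat \<Rightarrow> nat) \<Rightarrow> (nat \<Rightarrow> nat \<Rightarrow> nat \<Rightarrow> nat \<Rightarrow> bool)
                  \<Rightarrow> (nat \<Rightarrow> real) \<Rightarrow> nat \<Rightarrow> real mat" where
  "Le N k E a l = Kmat N k a l * LD N k E l"

definition Lmat :: "(nat \<Rightarrow> nat) \<Rightarrow> (nat \<Rightarrow> nat \<Rightarrow> nat) \<Rightarrow> (nat \<Rightarrow> nat \<Rightarrow> nat \<Rightarrow> nat \<Rightarrow> bool)
                  \<Rightarrow> (nat \<Rightarrow> real) \<Rightarrow> (nat \<Rightarrow> nat \<Rightarrow> nat \<Rightarrow> real) \<Rightarrow> nat \<Rightarrow> real mat" where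
  "Lmat N k E a c l = Bprod N k l * Le N k E a l * Cprod N k c l"

fun Ltot :: "(nat \<Rightarrow> nat) \<Rightarrow> (nat \<Rightarrow> nat \<Rightarrow> nat) \<Rightarrow> (nat \<Rightarrow> nat \<Rightarrow> nat \<Rightarrow> nat \<Rightarrow> bool)
                  \<Rightarrow> (nat \<Rightarrow> real) \<Rightarrow> (nat \<Rightarrow> nat \<Rightarrow> nat \<Rightarrow> real) \<Rightarrow> nat \<Rightarrow> real mat" where
  "Ltot N k E a c 0 = 0\<^sub>m (N 1) (N 1)"
| "Ltot N k E a c (Suc m) = Ltot N k E a c m + Lmat N k E a c (Suc m)"

definition eigvals :: "real mat \<Rightarrow> complex set" where
  "eigvals A = {z. eigenvalue (map_mat complex_of_real A) z}"

end

theory Submission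
  imports Defs
begin


lemma mat_vec_zero[simp]: "A \<in> carrier_mat nr nc \<Longrightarrow> A *\<^sub>v 0\<^sub>v nc = (0\<^sub>v nr :: 'a::comm_ring_1 vec)"
  by (intro eq_vecI) auto

lemma smult_zero_imp:
  fixes w :: "'a::field vec"
  assumes "w \<in> carrier_vec n" "w \<noteq> 0\<^sub>v n" "x \<cdot>\<^sub>v w = 0\<^sub>v n"
  shows "x = 0"
proof -
  obtain i where i: "i < n" "w $ i \<noteq> 0" using assms(1,2) by (metis eq_vecI carrier_vecD index_zero_vec)
  have "(x \<cdot>\<^sub>v w) $ i = x * w $ i" using i assms(1) by auto
  then show ?thesis using assms(3) i by simp
qed

lemma smult_zero_imp2:
  fixes u :: "'a::field vec"
  assumes "u \<in> carrier_vec n" "x \<noteq> 0" "x \<cdot>\<^sub>v u = 0\<^sub>v n"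
  shows "u = 0\<^sub>v n"
proof (rule eq_vecI)
  fix i assume "i < dim_vec (0\<^sub>v n :: 'a vec)"
  then have i: "i < n" by simp
  have "(x \<cdot>\<^sub>v u) $ i = x * u $ i" using i assms(1) by auto
  then show "u $ i = 0\<^sub>v n $ i" using assms i by simp
next
  show "dim_vec u = dim_vec (0\<^sub>v n :: 'a vec)" using assms(1) by simp
qed

lemma eig_transpose:
  fixes A :: "'a::field mat"
  assumes "A \<in> carrier_mat n n"
  shows "eigenvalue (transpose_mat A) x \<longleftrightarrow> eigenvalue A x"
  using assms by (simp add: eigenvalue_root_char_poly[OF assms] eigenvalue_root_char_poly[of _ n])

lemma eig_I:
  fixes A :: "'a::field mat"
  assumes "A \<in> carrier_mat n n" "v \<in> carrier_vec n" "v \<noteq> 0\<^sub>v n" "A *\<^sub>v v = x \<cdot>\<^sub>v v"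
  shows "eigenvalue A x"
  using assms unfolding eigenvalue_def eigenvector_def by auto

lemma eig_E:
  fixes A :: "'a::field mat"
  assumes "A \<in> carrier_mat n n" "eigenvalue A x"
  obtains v where "v \<in> carrier_vec n" "v \<noteq> 0\<^sub>v n" "A *\<^sub>v v = x \<cdot>\<^sub>v v"
  using assms unfolding eigenvalue_def eigenvector_def by auto

lemma eig_sandwich:
  fixes X :: "'a::field mat"
  assumes P: "P \<in> carrier_mat n m" and X: "X \<in> carrier_mat m m" and Q: "Q \<in> carrier_mat m n"
    and QP: "Q * P = 1\<^sub>m m" and X0: "eigenvalue X 0"
  shows "eigenvalue (P * X * Q) x \<longleftrightarrow> eigenvalue X x"
proof
  have PXQ: "P * X * Q \<in> carrier_mat n n" using P X Q by auto
  have e: "P * X * Q *\<^sub>v u = P *\<^sub>v (X *\<^sub>v (Q *\<^sub>v u))" if u: "u \<in> carrier_vec n" for u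
  proof -
    have "P * X * Q *\<^sub>v u = (P * X) *\<^sub>v (Q *\<^sub>v u)"
      by (rule assoc_mult_mat_vec[of _ n m _ n], insert P X Q u, auto)
    also have "\<dots> = P *\<^sub>v (X *\<^sub>v (Q *\<^sub>v u))"
      by (rule assoc_mult_mat_vec[of _ n m _ m], insert P X Q u, auto)
    finally show ?thesis .
  qed
  assume "eigenvalue (P * X * Q) x"
  then obtain w where w: "w \<in> carrier_vec n" "w \<noteq> 0\<^sub>v n" "P * X * Q *\<^sub>v w = x \<cdot>\<^sub>v w"
    using eig_E[OF PXQ] by blast
  show "eigenvalue X x"
  proof (cases "Q *\<^sub>v w = 0\<^sub>v m")
    case True
    have "x \<cdot>\<^sub>v w = P *\<^sub>v (X *\<^sub>v (Q *\<^sub>v w))" using w e by (simp flip: w(3))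
    also have "\<dots> = 0\<^sub>v n" using True P X by simp
    finally have "x = 0" using w smult_zero_imp by blast
    then show ?thesis using X0 by simp
  next
    case False
    have "X *\<^sub>v (Q *\<^sub>v w) = (Q * P) *\<^sub>v (X *\<^sub>v (Q *\<^sub>v w))" using QP X Q w by simp
    also have "\<dots> = Q *\<^sub>v (P * X * Q *\<^sub>v w)" using P X Q w e by simp
    also have "\<dots> = x \<cdot>\<^sub>v (Q *\<^sub>v w)" using w Q by (simp add: mult_mat_vec)
    finally show ?thesis using False Q w by (intro eig_I[OF X]) auto
  qed
next
  assume "eigenvalue X x"
  then obtain v where v: "v \<in> carrier_vec m" "v \<noteq> 0\<^sub>v m" "X *\<^sub>v v = x \<cdot>\<^sub>v v"
    using eig_E[OF X] by blast
  have Pv: "Q *\<^sub>v (P *\<^sub>v v) = v" using QP P Q v by (simp flip: assoc_mult_mat_vec)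
  have "P * X * Q *\<^sub>v (P *\<^sub>v v) = (P * X) *\<^sub>v (Q *\<^sub>v (P *\<^sub>v v))"
    by (rule assoc_mult_mat_vec[of _ n m _ n], insert P X Q v, auto)
  also have "\<dots> = P *\<^sub>v (X *\<^sub>v (Q *\<^sub>v (P *\<^sub>v v)))"
    by (rule assoc_mult_mat_vec[of _ n m _ m], insert P X Q v, auto)
  also have "\<dots> = x \<cdot>\<^sub>v (P *\<^sub>v v)" using Pv v P by (simp add: mult_mat_vec)
  finally show "eigenvalue (P * X * Q) x"
    using Pv v P X Q by (intro eig_I[of _ n]) auto
qed

lemma eig_step:
  fixes X :: "'a::field mat"
  assumes X: "X \<in> carrier_mat n n" and B: "B \<in> carrier_mat n m" and S: "S \<in> carrier_mat m m"
    and C: "C \<in> carrier_mat m n" and CB: "C * B = 1\<^sub>m m" and XB: "X * B = 0\<^sub>m n m"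
  shows "eigenvalue S x \<Longrightarrow> eigenvalue (X + B * S * C) x"
    and "eigenvalue (X + B * S * C) x \<Longrightarrow> eigenvalue S x \<or> eigenvalue X x"
    and "eigenvalue X x \<Longrightarrow> x \<noteq> 0 \<Longrightarrow> eigenvalue (X + B * S * C) x"
proof -
  define T where "T = X + B * S * C"
  have T: "T \<in> carrier_mat n n" using X B S C unfolding T_def by auto
  have TB: "T * B = B * S"
  proof -
    have "T * B = X * B + B * S * C * B" unfolding T_def using X B S C by (simp add: add_mult_distrib_mat[of _ n n])
    also have "B * S * C * B = B * S * (C * B)" using B S C by (meson assoc_mult_mat mult_carrier_mat)
    finally show ?thesis using XB CB B S by simp
  qed
  have BtTt: "transpose_mat B * transpose_mat T = transpose_mat S * transpose_mat B"
    using TB B S T by (metis transpose_mult)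
  have Tt: "transpose_mat T = transpose_mat X + transpose_mat C * (transpose_mat S * transpose_mat B)"
    unfolding T_def using X B S C
    by (simp add: transpose_add[of _ n n] transpose_mult[of _ n m _ n] transpose_mult[of _ m m _ n])
  have BtXt: "transpose_mat B * transpose_mat X = 0\<^sub>m m n"
  proof -
    have "transpose_mat B * transpose_mat X = transpose_mat (X * B)" using X B by (metis transpose_mult)
    also have "\<dots> = 0\<^sub>m m n" unfolding XB by (intro eq_matI) auto
    finally show ?thesis .
  qed
  have Ttv: "transpose_mat T *\<^sub>v y = transpose_mat X *\<^sub>v y + transpose_mat C *\<^sub>v (transpose_mat S *\<^sub>v (transpose_mat B *\<^sub>v y))"
    if y: "y \<in> carrier_vec n" for y
  proof -
    have "(transpose_mat C * (transpose_mat S * transpose_mat B)) *\<^sub>v y = transpose_mat C *\<^sub>v ((transpose_mat S * transpose_mat B) *\<^sub>v y)"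
      by (rule assoc_mult_mat_vec[of _ n m _ n], insert X B S C y, auto)
    also have "(transpose_mat S * transpose_mat B) *\<^sub>v y = transpose_mat S *\<^sub>v (transpose_mat B *\<^sub>v y)"
      by (rule assoc_mult_mat_vec[of _ m m _ n], insert X B S C y, auto)
    finally show ?thesis unfolding Tt using X B S C y
      by (simp add: add_mult_distrib_mat_vec[of _ n n])
  qed
  show "eigenvalue S x \<Longrightarrow> eigenvalue (X + B * S * C) x"
  proof -
    assume "eigenvalue S x"
    then obtain w where w: "w \<in> carrier_vec m" "w \<noteq> 0\<^sub>v m" "S *\<^sub>v w = x \<cdot>\<^sub>v w"
      using eig_E[OF S] by blast
    have "T *\<^sub>v (B *\<^sub>v w) = (T * B) *\<^sub>v w" using T B w by simp
    also have "\<dots> = B *\<^sub>v (S *\<^sub>v w)" using TB B S w by simp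
    also have "\<dots> = x \<cdot>\<^sub>v (B *\<^sub>v w)" using w B by (simp add: mult_mat_vec)
    finally have ev: "T *\<^sub>v (B *\<^sub>v w) = x \<cdot>\<^sub>v (B *\<^sub>v w)" .
    have "C *\<^sub>v (B *\<^sub>v w) = w" using CB C B w by (simp flip: assoc_mult_mat_vec)
    then have "B *\<^sub>v w \<noteq> 0\<^sub>v n" using w C by auto
    then show ?thesis using ev T B w unfolding T_def by (intro eig_I[of _ n]) auto
  qed
  show "eigenvalue (X + B * S * C) x \<Longrightarrow> eigenvalue S x \<or> eigenvalue X x"
  proof -
    assume "eigenvalue (X + B * S * C) x"
    then have "eigenvalue (transpose_mat T) x" using eig_transpose[OF T] unfolding T_def by simp
    then obtain y where y: "y \<in> carrier_vec n" "y \<noteq> 0\<^sub>v n" "transpose_mat T *\<^sub>v y = x \<cdot>\<^sub>v y"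
      using eig_E[of "transpose_mat T" n] T by auto
    show ?thesis
    proof (cases "transpose_mat B *\<^sub>v y = 0\<^sub>v m")
      case True
      have "transpose_mat X *\<^sub>v y = x \<cdot>\<^sub>v y" using y(3) Ttv[OF y(1)] True X S C y by simp
      then have "eigenvalue (transpose_mat X) x" using y X by (intro eig_I[of _ n]) auto
      then show ?thesis using eig_transpose[OF X] by simp
    next
      case False
      have "transpose_mat S *\<^sub>v (transpose_mat B *\<^sub>v y) = (transpose_mat S * transpose_mat B) *\<^sub>v y"
        using S B y by simp
      also have "\<dots> = transpose_mat B *\<^sub>v (transpose_mat T *\<^sub>v y)"
        using BtTt B T y by (metis assoc_mult_mat_vec transpose_carrier_mat)
      also have "\<dots> = x \<cdot>\<^sub>v (transpose_mat B *\<^sub>v y)" using y B by (simp add: mult_mat_vec)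
      finally have "eigenvalue (transpose_mat S) x" using False S B y by (intro eig_I[of _ m]) auto
      then show ?thesis using eig_transpose[OF S] by simp
    qed
  qed
  show "eigenvalue X x \<Longrightarrow> x \<noteq> 0 \<Longrightarrow> eigenvalue (X + B * S * C) x"
  proof -
    assume "eigenvalue X x" "x \<noteq> 0"
    then have "eigenvalue (transpose_mat X) x" using eig_transpose[OF X] by simp
    then obtain y where y: "y \<in> carrier_vec n" "y \<noteq> 0\<^sub>v n" "transpose_mat X *\<^sub>v y = x \<cdot>\<^sub>v y"
      using eig_E[of "transpose_mat X" n] X by auto
    have "x \<cdot>\<^sub>v (transpose_mat B *\<^sub>v y) = transpose_mat B *\<^sub>v (transpose_mat X *\<^sub>v y)"
      using y B by (simp add: mult_mat_vec)
    also have "\<dots> = (transpose_mat B * transpose_mat X) *\<^sub>v y" using X B y by simp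
    also have "\<dots> = 0\<^sub>v m" using BtXt y by (intro eq_vecI) auto
    finally have xz: "x \<cdot>\<^sub>v (transpose_mat B *\<^sub>v y) = 0\<^sub>v m" .
    have "transpose_mat B *\<^sub>v y \<in> carrier_vec m" using B unfolding carrier_vec_def by auto
    from smult_zero_imp2[OF this \<open>x \<noteq> 0\<close> xz]
    have "transpose_mat B *\<^sub>v y = 0\<^sub>v m" .
    then have "transpose_mat T *\<^sub>v y = x \<cdot>\<^sub>v y" using y(3) Ttv[OF y(1)] X S C y by simp
    then have "eigenvalue (transpose_mat T) x" using y T by (intro eig_I[of _ n]) auto
    then show ?thesis using eig_transpose[OF T] unfolding T_def by simp
  qed
qed

lemma eig_real:
  fixes A :: "real mat"
  assumes A: "A \<in> carrier_mat n n" and wpos: "\<forall>i<n. w i > 0"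
    and sym: "\<forall>i<n. \<forall>j<n. w i * A $$ (i,j) = w j * A $$ (j,i)"
    and ev: "eigenvalue (map_mat complex_of_real A) x"
  shows "x \<in> \<real>"
proof -
  have cA: "map_mat complex_of_real A \<in> carrier_mat n n" using A by simp
  obtain v where v: "v \<in> carrier_vec n" "v \<noteq> 0\<^sub>v n" "map_mat complex_of_real A *\<^sub>v v = x \<cdot>\<^sub>v v"
    using eig_E[OF cA ev] by blast
  have row: "(\<Sum>j<n. of_real (A $$ (i,j)) * v $ j) = x * v $ i" if i: "i < n" for i
  proof -
    have "(map_mat complex_of_real A *\<^sub>v v) $ i = x * v $ i" using v(3) i v(1) by (metis index_smult_vec(1) carrier_vecD)
    moreover have "(map_mat complex_of_real A *\<^sub>v v) $ i = (\<Sum>j<n. of_real (A $$ (i,j)) * v $ j)"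
      using i A v(1) by (auto simp: scalar_prod_def atLeast0LessThan intro!: sum.cong)
    ultimately show ?thesis by simp
  qed
  define G where "G i j = complex_of_real (w i * A $$ (i,j))" for i j
  define s where "s = (\<Sum>i<n. \<Sum>j<n. G i j * cnj (v $ i) * v $ j)"
  define r where "r = (\<Sum>i<n. complex_of_real (w i) * (cnj (v $ i) * v $ i))"
  have "s = (\<Sum>i<n. complex_of_real (w i) * cnj (v $ i) * (\<Sum>j<n. of_real (A $$ (i,j)) * v $ j))"
    unfolding s_def G_def by (simp add: sum_distrib_left mult_ac)
  also have "\<dots> = (\<Sum>i<n. complex_of_real (w i) * cnj (v $ i) * (x * v $ i))"
    by (intro sum.cong refl) (simp add: row)
  also have "\<dots> = x * r" unfolding r_def by (simp add: sum_distrib_left mult_ac)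
  finally have s1: "s = x * r" .
  have "cnj s = (\<Sum>i<n. \<Sum>j<n. G i j * v $ i * cnj (v $ j))" unfolding s_def G_def by simp
  also have "\<dots> = (\<Sum>j<n. \<Sum>i<n. G i j * v $ i * cnj (v $ j))" by (rule sum.swap)
  also have "\<dots> = s" unfolding s_def G_def using sym
    by (intro sum.cong refl) (simp add: mult_ac flip: of_real_mult)
  finally have s2: "cnj s = s" .
  have rr: "r = complex_of_real (\<Sum>i<n. w i * (cmod (v $ i))\<^sup>2)"
  proof -
    have cz: "cnj z * z = complex_of_real ((cmod z)\<^sup>2)" for z by (metis complex_norm_square mult.commute)
    show ?thesis unfolding r_def of_real_sum by (intro sum.cong refl) (simp only: cz of_real_mult)
  qed
  obtain i where i: "i < n" "v $ i \<noteq> 0" using v(1,2) by (metis eq_vecI carrier_vecD index_zero_vec)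
  have "(\<Sum>i<n. w i * (cmod (v $ i))\<^sup>2) > 0"
  proof (rule sum_pos2[of _ i])
    show "0 < w i * (cmod (v $ i))\<^sup>2" using i wpos by simp
  qed (use i wpos in \<open>auto intro: less_imp_le\<close>)
  then have r0: "r \<noteq> 0" and rc: "cnj r = r" unfolding rr by (auto simp del: of_real_sum of_real_mult of_real_power)
  have "cnj x * r = x * r" using s1 s2 rc by (metis complex_cnj_mult)
  then have "cnj x = x" using r0 by simp
  then show ?thesis using Reals_cnj_iff by blast
qed




abbreviation cm :: "real mat \<Rightarrow> complex mat" where "cm \<equiv> map_mat complex_of_real"

lemma cm_add: "A \<in> carrier_mat nr nc \<Longrightarrow> B \<in> carrier_mat nr nc \<Longrightarrow> cm (A + B) = cm A + cm B"
  by (intro eq_matI) auto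

lemma cm_mult: "A \<in> carrier_mat nr n \<Longrightarrow> B \<in> carrier_mat n nc \<Longrightarrow> cm (A * B) = cm A * cm B"
  by (rule of_real_hom.mat_hom_mult)

lemma cm_one: "cm (1\<^sub>m n) = 1\<^sub>m n" by (rule of_real_hom.mat_hom_one)
lemma cm_zero: "cm (0\<^sub>m nr nc) = 0\<^sub>m nr nc" by (intro eq_matI) auto

lemma goff_Suc: "goff k l (Suc p) = goff k l p + k l p"
  unfolding goff_def by simp

lemma goff_mono: "p \<le> q \<Longrightarrow> goff k l p \<le> goff k l q"
  unfolding goff_def by (intro sum_mono2) auto

lemma group_unique: "in_group k l p i \<Longrightarrow> in_group k l q i \<Longrightarrow> p = q"
proof (rule ccontr)
  assume a: "in_group k l p i" "in_group k l q i" "p \<noteq> q"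
  have *: "False" if "in_group k l p i" "in_group k l q i" "p < q" for p q
  proof -
    have "goff k l (Suc p) \<le> goff k l q" using that(3) by (intro goff_mono) auto
    then show False using that(1,2) unfolding in_group_def goff_Suc by linarith
  qed
  show False using a *[of p q] *[of q p] by (cases "p < q") auto
qed

lemma shift_sum:
  fixes f :: "nat \<Rightarrow> 'a::comm_monoid_add"
  assumes "g + kk \<le> n"
  shows "(\<Sum>i<n. if g \<le> i \<and> i < g + kk then f (i - g) else 0) = (\<Sum>j<kk. f j)"
proof -
  have "(\<Sum>i<n. if g \<le> i \<and> i < g + kk then f (i - g) else 0) = (\<Sum>i\<in>{i\<in>{..<n}. g \<le> i \<and> i < g + kk}. f (i - g))"
    by (rule sum.inter_filter[symmetric]) auto
  also have "{i\<in>{..<n}. g \<le> i \<and> i < g + kk} = {g..<g+kk}" using assms by auto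
  also have "(\<Sum>i\<in>{g..<g+kk}. f (i - g)) = (\<Sum>j\<in>{0..<kk}. f j)"
    using sum.shift_bounds_nat_ivl[of "\<lambda>i. f (i - g)" 0 g kk] by (simp add: add.commute)
  finally show ?thesis by (simp add: atLeast0LessThan)
qed

lemma lap_row_sum:
  assumes "\<not> E i i" "i < n"
  shows "(\<Sum>j<n. lap_entry n E i j) = 0"
proof -
  have "lap_entry n E i j = (if j = i then real (card {m. m < n \<and> E i m}) else 0) + (if E i j then -1 else 0)" for j
    using assms unfolding lap_entry_def by auto
  then have "(\<Sum>j<n. lap_entry n E i j) = real (card {m. m < n \<and> E i m}) + (\<Sum>j<n. if E i j then -1 else 0)"
    using assms by (simp add: sum.distrib)
  also have "(\<Sum>j<n. if E i j then -1 else 0) = (\<Sum>j\<in>{j\<in>{..<n}. E i j}. -1::real)"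
    by (rule sum.inter_filter[symmetric]) auto
  also have "{j\<in>{..<n}. E i j} = {m. m < n \<and> E i m}" by auto
  finally show ?thesis by simp
qed

lemma lap_sym:
  assumes "\<forall>i<n. \<forall>j<n. E i j = E j i" "i < n" "j < n"
  shows "lap_entry n E i j = lap_entry n E j i"
  using assms unfolding lap_entry_def by auto




locale hier =
  fixes M :: nat and N :: "nat \<Rightarrow> nat" and k :: "nat \<Rightarrow> nat \<Rightarrow> nat"
    and E :: "nat \<Rightarrow> nat \<Rightarrow> nat \<Rightarrow> nat \<Rightarrow> bool"
    and a :: "nat \<Rightarrow> real" and c :: "nat \<Rightarrow> nat \<Rightarrow> nat \<Rightarrow> real"
  assumes M2: "M \<ge> 2"
    and Npos: "\<forall>l\<in>{1..M}. N l > 0"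
    and Ntop: "N (Suc M) = 1"
    and kpos: "\<forall>l\<in>{1..M}. \<forall>p<N (Suc l). k l p \<ge> 1"
    and ksum: "\<forall>l\<in>{1..M}. (\<Sum>p<N (Suc l). k l p) = N l"
    and Esym: "\<forall>l\<in>{1..M}. \<forall>p<N (Suc l). \<forall>i<k l p. \<forall>j<k l p. E l p i j = E l p j i"
    and Eirr: "\<forall>l\<in>{1..M}. \<forall>p<N (Suc l). \<forall>i<k l p. \<not> E l p i i"
    and apos: "\<forall>i<N 1. a i > 0"
    and csum: "\<forall>l\<in>{1..<M}. \<forall>p<N (Suc l). (\<Sum>j<k l p. c l p j) = 1"
begin

lemma group_bound:
  assumes l: "l \<in> {1..M}" and p: "p < N (Suc l)"
  shows "goff k l p + k l p \<le> N l"
proof -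
  have "goff k l (Suc p) \<le> goff k l (N (Suc l))" using p by (intro goff_mono) auto
  also have "\<dots> = N l" using ksum l unfolding goff_def by auto
  finally show ?thesis unfolding goff_Suc .
qed

lemma LD_nz:
  assumes "LD N k E l $$ (i,j) \<noteq> 0" "i < N l" "j < N l"
  shows "\<exists>q<N (Suc l). in_group k l q i \<and> in_group k l q j"
  using assms unfolding LD_def by (auto split: if_splits)

lemma LD_in:
  assumes "in_group k l p i" "in_group k l p j" "p < N (Suc l)" "i < N l" "j < N l"
  shows "LD N k E l $$ (i,j) = lap_entry (k l p) (E l p) (i - goff k l p) (j - goff k l p)"
proof -
  have "(THE p. p < N (Suc l) \<and> in_group k l p i) = p"
    using assms group_unique by blast
  then show ?thesis using assms unfolding LD_def by auto
qed

lemma LD_carrier: "LD N k E l \<in> carrier_mat (N l) (N l)" unfolding LD_def by auto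
lemma K_carrier: "Kmat N k a l \<in> carrier_mat (N l) (N l)" unfolding Kmat_def by auto
lemma Le_carrier: "Le N k E a l \<in> carrier_mat (N l) (N l)" unfolding Le_def by (rule mult_carrier_mat[OF K_carrier LD_carrier])
lemma B_carrier: "Bmat N k l \<in> carrier_mat (N l) (N (Suc l))" unfolding Bmat_def by auto
lemma C_carrier: "Cmat N k c l \<in> carrier_mat (N (Suc l)) (N l)" unfolding Cmat_def by auto

lemma LD_B:
  assumes l: "l \<in> {1..M}"
  shows "LD N k E l * Bmat N k l = 0\<^sub>m (N l) (N (Suc l))"
proof (rule eq_matI)
  fix i p assume "i < dim_row (0\<^sub>m (N l) (N (Suc l)) :: real mat)" "p < dim_col (0\<^sub>m (N l) (N (Suc l)) :: real mat)"
  then have i: "i < N l" and p: "p < N (Suc l)" by auto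
  have "(LD N k E l * Bmat N k l) $$ (i,p) = (\<Sum>j<N l. LD N k E l $$ (i,j) * (if in_group k l p j then 1 else 0))"
    using i p LD_carrier[of l] unfolding Bmat_def
    by (auto simp: scalar_prod_def atLeast0LessThan intro!: sum.cong)
  also have "\<dots> = 0"
  proof (cases "in_group k l p i")
    case True
    have "(\<Sum>j<N l. LD N k E l $$ (i,j) * (if in_group k l p j then 1 else 0))
        = (\<Sum>j<N l. if goff k l p \<le> j \<and> j < goff k l p + k l p then lap_entry (k l p) (E l p) (i - goff k l p) (j - goff k l p) else 0)"
      by (intro sum.cong refl) (use True i p LD_in in \<open>auto simp: in_group_def\<close>)
    also have "\<dots> = (\<Sum>j<k l p. lap_entry (k l p) (E l p) (i - goff k l p) j)"
      by (rule shift_sum[OF group_bound[OF l p]])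
    also have "\<dots> = 0"
      by (rule lap_row_sum) (use True Eirr l p in \<open>auto simp: in_group_def\<close>)
    finally show ?thesis .
  next
    case False
    have *: "LD N k E l $$ (i,j) * (if in_group k l p j then 1 else 0) = 0" if j: "j < N l" for j
    proof (rule ccontr)
      assume "LD N k E l $$ (i,j) * (if in_group k l p j then 1 else 0) \<noteq> 0"
      then have "LD N k E l $$ (i,j) \<noteq> 0" "in_group k l p j" by (auto split: if_splits)
      then obtain q where "in_group k l q i" "in_group k l q j" using LD_nz i j by blast
      then show False using False \<open>in_group k l p j\<close> group_unique by blast
    qed
    show ?thesis by (intro sum.neutral ballI) (rule *, simp)
  qed
  finally show "(LD N k E l * Bmat N k l) $$ (i,p) = 0\<^sub>m (N l) (N (Suc l)) $$ (i,p)" using i p by simp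
qed (auto simp: Bmat_def LD_def)

lemma Le_B:
  assumes l: "l \<in> {1..M}"
  shows "Le N k E a l * Bmat N k l = 0\<^sub>m (N l) (N (Suc l))"
proof -
  have "Le N k E a l * Bmat N k l = Kmat N k a l * (LD N k E l * Bmat N k l)"
    unfolding Le_def using K_carrier LD_carrier B_carrier by (rule assoc_mult_mat)
  then show ?thesis using LD_B[OF l] K_carrier[of l] by simp
qed

lemma C_B:
  assumes l: "l \<in> {1..<M}"
  shows "Cmat N k c l * Bmat N k l = 1\<^sub>m (N (Suc l))"
proof (rule eq_matI)
  fix p q assume "p < dim_row (1\<^sub>m (N (Suc l)) :: real mat)" "q < dim_col (1\<^sub>m (N (Suc l)) :: real mat)"
  then have p: "p < N (Suc l)" and q: "q < N (Suc l)" by auto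
  have l': "l \<in> {1..M}" using l by auto
  have "(Cmat N k c l * Bmat N k l) $$ (p,q) = (\<Sum>i<N l. (if in_group k l p i then c l p (i - goff k l p) else 0) * (if in_group k l q i then 1 else 0))"
    using p q unfolding Bmat_def Cmat_def
    by (auto simp: scalar_prod_def atLeast0LessThan intro!: sum.cong)
  also have "\<dots> = (if p = q then 1 else 0)"
  proof (cases "p = q")
    case True
    have "(\<Sum>i<N l. (if in_group k l p i then c l p (i - goff k l p) else 0) * (if in_group k l q i then 1 else 0))
       = (\<Sum>i<N l. if goff k l p \<le> i \<and> i < goff k l p + k l p then c l p (i - goff k l p) else 0)"
      using True by (intro sum.cong refl) (auto simp: in_group_def)
    also have "\<dots> = (\<Sum>j<k l p. c l p j)" by (rule shift_sum[OF group_bound[OF l' p]])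
    also have "\<dots> = 1" using csum l p by auto
    finally show ?thesis using True by simp
  next
    case False
    then show ?thesis using group_unique by (auto intro!: sum.neutral)
  qed
  finally show "(Cmat N k c l * Bmat N k l) $$ (p,q) = 1\<^sub>m (N (Suc l)) $$ (p,q)" using p q by simp
qed (auto simp: Bmat_def Cmat_def)

lemma N_Suc_pos: "l \<in> {1..M} \<Longrightarrow> N (Suc l) > 0"
  using Npos Ntop by (cases "l = M") auto

lemma Le_eig0:
  assumes l: "l \<in> {1..M}"
  shows "eigenvalue (cm (Le N k E a l)) 0"
proof -
  have Np: "N (Suc l) > 0" using N_Suc_pos[OF l] .
  have Nl: "N l > 0" using Npos l by auto
  define v where "v = col (cm (Bmat N k l)) 0"
  have v: "v \<in> carrier_vec (N l)" unfolding v_def carrier_vec_def using B_carrier[of l] by simp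
  have "k l 0 \<ge> 1" using kpos l Np by auto
  then have "v $ 0 = 1" unfolding v_def Bmat_def using Np Nl
    by (auto simp: in_group_def goff_def)
  then have v0: "v \<noteq> 0\<^sub>v (N l)" using Nl by auto
  have "cm (Le N k E a l) *\<^sub>v v = col (cm (Le N k E a l) * cm (Bmat N k l)) 0"
    unfolding v_def using Np
    by (intro col_mult2[symmetric, of _ "N l" "N l" _ "N (Suc l)"]) (use Le_carrier[of l] B_carrier[of l] in auto)
  also have "cm (Le N k E a l) * cm (Bmat N k l) = cm (0\<^sub>m (N l) (N (Suc l)))"
    using cm_mult[OF Le_carrier[of l] B_carrier[of l]] Le_B[OF l] by metis
  also have "col \<dots> 0 = 0\<^sub>v (N l)" using Np by (intro eq_vecI) auto
  also have "\<dots> = 0 \<cdot>\<^sub>v v" using v by (intro eq_vecI) auto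
  finally show ?thesis using v v0 Le_carrier by (intro eig_I[of _ "N l"]) auto
qed

end



context hier begin

lemma aw_pos: "l \<in> {1..M} \<Longrightarrow> i < N l \<Longrightarrow> aw k a l i > 0"
proof (induction l arbitrary: i)
  case 0 then show ?case by simp
next
  case (Suc l)
  show ?case
  proof (cases l)
    case 0 then show ?thesis using Suc apos by simp
  next
    case (Suc l')
    have l': "Suc l' \<in> {1..M}" using Suc \<open>Suc l \<in> {1..M}\<close> by auto
    have p: "i < N (Suc (Suc l'))" using Suc.prems Suc by simp
    have b: "goff k (Suc l') i + k (Suc l') i \<le> N (Suc l')" using group_bound[OF l' p] .
    have kp: "k (Suc l') i \<ge> 1" using kpos l' p by auto
    have "aw k a (Suc (Suc l')) i = (\<Sum>j\<in>{goff k (Suc l') i..<goff k (Suc l') i + k (Suc l') i}. aw k a (Suc l') j)"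
      by simp
    also have "\<dots> > 0"
    proof (rule sum_pos)
      show "{goff k (Suc l') i..<goff k (Suc l') i + k (Suc l') i} \<noteq> {}" using kp by auto
      fix j assume "j \<in> {goff k (Suc l') i..<goff k (Suc l') i + k (Suc l') i}"
      then have "j < N (Suc l')" using b by auto
      then show "aw k a (Suc l') j > 0" using Suc.IH[of j] Suc l' by simp
    qed simp
    finally show ?thesis using Suc by simp
  qed
qed

lemma LD_sym:
  assumes l: "l \<in> {1..M}" and i: "i < N l" and j: "j < N l"
  shows "LD N k E l $$ (i,j) = LD N k E l $$ (j,i)"
proof (cases "\<exists>q<N (Suc l). in_group k l q i \<and> in_group k l q j")
  case True
  then obtain q where q: "q < N (Suc l)" "in_group k l q i" "in_group k l q j" by blast
  have "LD N k E l $$ (i,j) = lap_entry (k l q) (E l q) (i - goff k l q) (j - goff k l q)"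
    using LD_in q i j by blast
  also have "\<dots> = lap_entry (k l q) (E l q) (j - goff k l q) (i - goff k l q)"
    by (rule lap_sym) (use Esym l q in \<open>auto simp: in_group_def\<close>)
  also have "\<dots> = LD N k E l $$ (j,i)" using LD_in q i j by simp
  finally show ?thesis .
next
  case False
  then have "LD N k E l $$ (i,j) = 0" "LD N k E l $$ (j,i) = 0" using LD_nz i j by blast+
  then show ?thesis by simp
qed

lemma KLD_entry:
  assumes i: "i < N l" and j: "j < N l"
  shows "Le N k E a l $$ (i,j) = LD N k E l $$ (i,j) / aw k a l i"
proof -
  have "Le N k E a l $$ (i,j) = (\<Sum>m<N l. (if i = m then 1 / aw k a l i else 0) * LD N k E l $$ (m,j))"
    unfolding Le_def using i j LD_carrier[of l] unfolding Kmat_def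
    by (auto simp: scalar_prod_def atLeast0LessThan intro!: sum.cong)
  also have "\<dots> = (\<Sum>m<N l. if i = m then LD N k E l $$ (m,j) / aw k a l i else 0)"
    by (intro sum.cong refl) auto
  also have "\<dots> = LD N k E l $$ (i,j) / aw k a l i" using i by simp
  finally show ?thesis .
qed

lemma Le_real:
  assumes l: "l \<in> {1..M}"
  shows "eigvals (Le N k E a l) \<subseteq> \<real>"
proof
  fix x assume "x \<in> eigvals (Le N k E a l)"
  then have ev: "eigenvalue (cm (Le N k E a l)) x" unfolding eigvals_def by simp
  show "x \<in> \<real>"
  proof (rule eig_real[OF Le_carrier _ _ ev])
    show "\<forall>i<N l. aw k a l i > 0" using aw_pos l by auto
    show "\<forall>i<N l. \<forall>j<N l. aw k a l i * Le N k E a l $$ (i,j) = aw k a l j * Le N k E a l $$ (j,i)"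
      using KLD_entry aw_pos[OF l] LD_sym[OF l] by (simp add: order.strict_implies_not_eq[symmetric])
  qed
qed

end



context hier begin

lemma Bprod_carrier: "l \<ge> 1 \<Longrightarrow> Bprod N k l \<in> carrier_mat (N 1) (N l)"
proof (induction l)
  case (Suc l)
  then show ?case using B_carrier[of l] by (cases l) auto
qed auto

lemma Cprod_carrier: "l \<ge> 1 \<Longrightarrow> Cprod N k c l \<in> carrier_mat (N l) (N 1)"
proof (induction l)
  case (Suc l)
  then show ?case using C_carrier[of l] by (cases l) auto
qed auto

lemma CB_prod: "l \<in> {1..M} \<Longrightarrow> Cprod N k c l * Bprod N k l = 1\<^sub>m (N l)"
proof (induction l)
  case (Suc l0)
  show ?case
  proof (cases l0)
    case 0 then show ?thesis by simp
  next
  case (Suc l)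
  have l: "Suc l \<in> {1..<M}" using Suc.prems \<open>l0 = Suc l\<close> by auto
  have IH: "Cprod N k c (Suc l) * Bprod N k (Suc l) = 1\<^sub>m (N (Suc l))" using Suc.IH Suc.prems \<open>l0 = Suc l\<close> by auto
  have Cp: "Cprod N k c (Suc l) \<in> carrier_mat (N (Suc l)) (N 1)" by (rule Cprod_carrier) simp
  have Bp: "Bprod N k (Suc l) \<in> carrier_mat (N 1) (N (Suc l))" by (rule Bprod_carrier) simp
  have C: "Cmat N k c (Suc l) \<in> carrier_mat (N (Suc (Suc l))) (N (Suc l))" by (rule C_carrier)
  have B: "Bmat N k (Suc l) \<in> carrier_mat (N (Suc l)) (N (Suc (Suc l)))" by (rule B_carrier)
  have "Cprod N k c (Suc (Suc l)) * Bprod N k (Suc (Suc l))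
     = (Cmat N k c (Suc l) * Cprod N k c (Suc l)) * (Bprod N k (Suc l) * Bmat N k (Suc l))" by simp
  also have "\<dots> = Cmat N k c (Suc l) * (Cprod N k c (Suc l) * (Bprod N k (Suc l) * Bmat N k (Suc l)))"
    by (rule assoc_mult_mat[OF C Cp mult_carrier_mat[OF Bp B]])
  also have "Cprod N k c (Suc l) * (Bprod N k (Suc l) * Bmat N k (Suc l)) = (Cprod N k c (Suc l) * Bprod N k (Suc l)) * Bmat N k (Suc l)"
    by (rule assoc_mult_mat[OF Cp Bp B, symmetric])
  also have "Cmat N k c (Suc l) * ((Cprod N k c (Suc l) * Bprod N k (Suc l)) * Bmat N k (Suc l)) = Cmat N k c (Suc l) * Bmat N k (Suc l)" using IH B by simp
  also have "\<dots> = 1\<^sub>m (N (Suc (Suc l)))" using C_B[OF l] .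
  finally show ?thesis using \<open>l0 = Suc l\<close> by simp
  qed
qed auto

theorem part1:
  assumes l: "l \<in> {1..M}"
  shows "eigvals (Le N k E a l) = eigvals (Lmat N k E a c l) \<and> eigvals (Lmat N k E a c l) \<subseteq> \<real>"
proof -
  have l1: "l \<ge> 1" using l by auto
  have Bp: "Bprod N k l \<in> carrier_mat (N 1) (N l)" using Bprod_carrier[OF l1] .
  have Cp: "Cprod N k c l \<in> carrier_mat (N l) (N 1)" using Cprod_carrier[OF l1] .
  have X: "Le N k E a l \<in> carrier_mat (N l) (N l)" by (rule Le_carrier)
  have cL: "cm (Lmat N k E a c l) = cm (Bprod N k l) * cm (Le N k E a l) * cm (Cprod N k c l)"
    unfolding Lmat_def using cm_mult[OF mult_carrier_mat[OF Bp X] Cp] cm_mult[OF Bp X] by simp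
  have QP: "cm (Cprod N k c l) * cm (Bprod N k l) = 1\<^sub>m (N l)"
    using cm_mult[OF Cp Bp] CB_prod[OF l] cm_one by metis
  have eq: "eigenvalue (cm (Lmat N k E a c l)) x \<longleftrightarrow> eigenvalue (cm (Le N k E a l)) x" for x
    unfolding cL using Bp Cp X QP Le_eig0[OF l]
    by (intro eig_sandwich[of _ "N 1" "N l"]) auto
  then have "eigvals (Le N k E a l) = eigvals (Lmat N k E a c l)" unfolding eigvals_def by auto
  then show ?thesis using Le_real[OF l] by simp
qed

end



context hier begin

function Sr :: "nat \<Rightarrow> real mat" where
  "Sr m = (if M \<le> m then Le N k E a M else Le N k E a m + Bmat N k m * Sr (Suc m) * Cmat N k c m)"
  by auto
termination by (relation "measure (\<lambda>m. M - m)") auto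

declare Sr.simps[simp del]

lemma Sr_carrier: "m \<le> M \<Longrightarrow> Sr m \<in> carrier_mat (N m) (N m)"
proof (induction m rule: Sr.induct)
  case (1 m)
  show ?case
  proof (cases "M \<le> m")
    case True
    then have "m = M" using 1 by simp
    then show ?thesis using Le_carrier by (simp add: Sr.simps)
  next
    case False
    have S: "Sr (Suc m) \<in> carrier_mat (N (Suc m)) (N (Suc m))" using 1 False by simp
    show ?thesis using False Le_carrier[of m] B_carrier[of m] C_carrier[of m] S
      by (subst Sr.simps) (auto intro!: add_carrier_mat mult_carrier_mat)
  qed
qed

lemma Ltot_carrier: "Ltot N k E a c m \<in> carrier_mat (N 1) (N 1)"
proof (induction m)
  case (Suc m)
  have "Lmat N k E a c (Suc m) \<in> carrier_mat (N 1) (N 1)"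
    unfolding Lmat_def using Bprod_carrier[of "Suc m"] Cprod_carrier[of "Suc m"] Le_carrier[of "Suc m"]
    by (auto intro!: mult_carrier_mat)
  then show ?case using Suc by simp
qed simp

lemma Ltot_Sr: "m \<le> M \<Longrightarrow> 1 \<le> m \<Longrightarrow>
   Ltot N k E a c M = Ltot N k E a c (m - 1) + Bprod N k m * Sr m * Cprod N k c m"
proof (induction m rule: inc_induct)
  case base
  have "M = Suc (M - 1)" using M2 by simp
  then have "Ltot N k E a c M = Ltot N k E a c (M - 1) + Lmat N k E a c M" by (metis Ltot.simps(2))
  then show ?case unfolding Lmat_def by (simp add: Sr.simps)
next
  case (step n)
  have n1: "n = Suc (n - 1)" using step by simp
  have Ln: "Ltot N k E a c n = Ltot N k E a c (n - 1) + Lmat N k E a c n" using n1 by (metis Ltot.simps(2))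
  have BS: "Bprod N k (Suc n) = Bprod N k n * Bmat N k n" using n1 by (metis Bprod.simps(3))
  have CS: "Cprod N k c (Suc n) = Cmat N k c n * Cprod N k c n" using n1 by (metis Cprod.simps(3))
  have Srn: "Sr n = Le N k E a n + Bmat N k n * Sr (Suc n) * Cmat N k c n" using step by (simp add: Sr.simps)
  have Bp: "Bprod N k n \<in> carrier_mat (N 1) (N n)" using Bprod_carrier step by simp
  have Cp: "Cprod N k c n \<in> carrier_mat (N n) (N 1)" using Cprod_carrier step by simp
  have X: "Le N k E a n \<in> carrier_mat (N n) (N n)" by (rule Le_carrier)
  have B: "Bmat N k n \<in> carrier_mat (N n) (N (Suc n))" by (rule B_carrier)
  have C: "Cmat N k c n \<in> carrier_mat (N (Suc n)) (N n)" by (rule C_carrier)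
  have S: "Sr (Suc n) \<in> carrier_mat (N (Suc n)) (N (Suc n))" using Sr_carrier step by simp
  have L0: "Ltot N k E a c (n - 1) \<in> carrier_mat (N 1) (N 1)" by (rule Ltot_carrier)
  define Y where "Y = Bmat N k n * Sr (Suc n) * Cmat N k c n"
  have Y: "Y \<in> carrier_mat (N n) (N n)" unfolding Y_def using B S C by auto
  have e1: "Bprod N k n * (Le N k E a n + Y) * Cprod N k c n
      = Bprod N k n * Le N k E a n * Cprod N k c n + Bprod N k n * Y * Cprod N k c n"
  proof -
    have "Bprod N k n * (Le N k E a n + Y) = Bprod N k n * Le N k E a n + Bprod N k n * Y"
      by (rule mult_add_distrib_mat[OF Bp X Y])
    then show ?thesis using add_mult_distrib_mat[OF mult_carrier_mat[OF Bp X] mult_carrier_mat[OF Bp Y] Cp]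
      by simp
  qed
  have e2: "Bprod N k n * Y * Cprod N k c n = Bprod N k (Suc n) * Sr (Suc n) * Cprod N k c (Suc n)"
  proof -
    have BSc: "Bmat N k n * Sr (Suc n) \<in> carrier_mat (N n) (N (Suc n))" using B S by auto
    have PB: "Bprod N k n * Bmat N k n \<in> carrier_mat (N 1) (N (Suc n))" using Bp B by auto
    have "Bprod N k n * Y = Bprod N k n * (Bmat N k n * Sr (Suc n)) * Cmat N k c n"
      unfolding Y_def by (rule assoc_mult_mat[OF Bp BSc C, symmetric])
    also have "Bprod N k n * (Bmat N k n * Sr (Suc n)) = Bprod N k n * Bmat N k n * Sr (Suc n)"
      by (rule assoc_mult_mat[OF Bp B S, symmetric])
    finally have "Bprod N k n * Y * Cprod N k c n = (Bprod N k n * Bmat N k n * Sr (Suc n) * Cmat N k c n) * Cprod N k c n"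
      by simp
    also have "\<dots> = Bprod N k n * Bmat N k n * Sr (Suc n) * (Cmat N k c n * Cprod N k c n)"
      by (rule assoc_mult_mat[OF mult_carrier_mat[OF PB S] C Cp])
    finally show ?thesis unfolding BS CS .
  qed
  have "Ltot N k E a c M = Ltot N k E a c n + Bprod N k (Suc n) * Sr (Suc n) * Cprod N k c (Suc n)"
    using step by simp
  also have "\<dots> = Ltot N k E a c (n - 1) + (Bprod N k n * Le N k E a n * Cprod N k c n
        + Bprod N k (Suc n) * Sr (Suc n) * Cprod N k c (Suc n))"
    unfolding Ln Lmat_def using L0 Bp X Cp Bp B S C Cp Bprod_carrier[of "Suc n"] Cprod_carrier[of "Suc n"]
    by (intro assoc_add_mat[of _ "N 1" "N 1"]) (auto intro!: mult_carrier_mat simp del: assoc_mult_mat)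
  also have "\<dots> = Ltot N k E a c (n - 1) + Bprod N k n * Sr n * Cprod N k c n"
    unfolding Srn Y_def[symmetric] e1 e2 ..
  finally show ?case .
qed

lemma Ltot_eq_Sr: "Ltot N k E a c M = Sr 1"
proof -
  have "Ltot N k E a c M = Ltot N k E a c 0 + Bprod N k 1 * Sr 1 * Cprod N k c 1"
    using Ltot_Sr[of 1] M2 by simp
  then show ?thesis using Sr_carrier[of 1] M2 by simp
qed

end



context hier begin

lemma Sr_eig: "m \<le> M \<Longrightarrow> 1 \<le> m \<Longrightarrow>
   eigvals (Sr m) = {0} \<union> (\<Union>l\<in>{m..M}. eigvals (Le N k E a l) - {0})"
proof (induction m rule: inc_induct)
  case base
  have M1: "M \<in> {1..M}" using M2 by simp
  have "0 \<in> eigvals (Le N k E a M)" using Le_eig0[OF M1] unfolding eigvals_def by simp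
  then show ?case by (auto simp: Sr.simps)
next
  case (step n)
  have n: "n \<in> {1..<M}" "n \<in> {1..M}" using step by auto
  have X: "cm (Le N k E a n) \<in> carrier_mat (N n) (N n)" using Le_carrier[of n] by simp
  have B: "cm (Bmat N k n) \<in> carrier_mat (N n) (N (Suc n))" using B_carrier[of n] by simp
  have C: "cm (Cmat N k c n) \<in> carrier_mat (N (Suc n)) (N n)" using C_carrier[of n] by simp
  have S0: "Sr (Suc n) \<in> carrier_mat (N (Suc n)) (N (Suc n))" using Sr_carrier step by simp
  have S: "cm (Sr (Suc n)) \<in> carrier_mat (N (Suc n)) (N (Suc n))" using S0 by simp
  have CB: "cm (Cmat N k c n) * cm (Bmat N k n) = 1\<^sub>m (N (Suc n))"
    using cm_mult[OF C_carrier[of n] B_carrier[of n]] C_B[OF n(1)] cm_one by metis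
  have XB: "cm (Le N k E a n) * cm (Bmat N k n) = 0\<^sub>m (N n) (N (Suc n))"
    using cm_mult[OF Le_carrier[of n] B_carrier[of n]] Le_B[OF n(2)] cm_zero by metis
  have Srn: "cm (Sr n) = cm (Le N k E a n) + cm (Bmat N k n) * cm (Sr (Suc n)) * cm (Cmat N k c n)"
  proof -
    have BS: "Bmat N k n * Sr (Suc n) \<in> carrier_mat (N n) (N (Suc n))" using B_carrier[of n] S0 by auto
    have "cm (Sr n) = cm (Le N k E a n + Bmat N k n * Sr (Suc n) * Cmat N k c n)"
      using step by (simp add: Sr.simps)
    also have "\<dots> = cm (Le N k E a n) + cm (Bmat N k n * Sr (Suc n) * Cmat N k c n)"
      by (rule cm_add[OF Le_carrier mult_carrier_mat[OF BS C_carrier]])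
    also have "cm (Bmat N k n * Sr (Suc n) * Cmat N k c n) = cm (Bmat N k n * Sr (Suc n)) * cm (Cmat N k c n)"
      by (rule cm_mult[OF BS C_carrier])
    also have "cm (Bmat N k n * Sr (Suc n)) = cm (Bmat N k n) * cm (Sr (Suc n))"
      by (rule cm_mult[OF B_carrier S0])
    finally show ?thesis .
  qed
  have IH: "eigvals (Sr (Suc n)) = {0} \<union> (\<Union>l\<in>{Suc n..M}. eigvals (Le N k E a l) - {0})"
    using step by simp
  have S00: "eigenvalue (cm (Sr (Suc n))) 0" using IH unfolding eigvals_def by auto
  have "eigvals (Sr n) = eigvals (Sr (Suc n)) \<union> (eigvals (Le N k E a n) - {0})"
  proof (intro equalityI subsetI)
    fix x assume "x \<in> eigvals (Sr n)"
    then have "eigenvalue (cm (Sr (Suc n))) x \<or> eigenvalue (cm (Le N k E a n)) x"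
      using eig_step(2)[OF X B S C CB XB] Srn unfolding eigvals_def by simp
    moreover have "x = 0 \<Longrightarrow> eigenvalue (cm (Sr (Suc n))) x" using S00 by simp
    ultimately show "x \<in> eigvals (Sr (Suc n)) \<union> (eigvals (Le N k E a n) - {0})"
      unfolding eigvals_def by auto
  next
    fix x assume "x \<in> eigvals (Sr (Suc n)) \<union> (eigvals (Le N k E a n) - {0})"
    then show "x \<in> eigvals (Sr n)"
      using eig_step(1)[OF X B S C CB XB] eig_step(3)[OF X B S C CB XB] Srn unfolding eigvals_def by auto
  qed
  also have "\<dots> = {0} \<union> (\<Union>l\<in>{n..M}. eigvals (Le N k E a l) - {0})"
  proof -
    have "{n..M} = insert n {Suc n..M}" using step by auto
    then show ?thesis unfolding IH by auto
  qed
  finally show ?case .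
qed

theorem part2: "eigvals (Ltot N k E a c M) = {0} \<union> (\<Union>l\<in>{1..M}. eigvals (Le N k E a l) - {0})"
  using Sr_eig[of 1] Ltot_eq_Sr M2 by simp

end

theorem theorem2:
  fixes M :: nat and N :: "nat \<Rightarrow> nat" and k :: "nat \<Rightarrow> nat \<Rightarrow> nat"
    and E :: "nat \<Rightarrow> nat \<Rightarrow> nat \<Rightarrow> nat \<Rightarrow> bool"
    and a :: "nat \<Rightarrow> real" and c :: "nat \<Rightarrow> nat \<Rightarrow> nat \<Rightarrow> real"
  assumes M2: "M \<ge> 2"
    and Npos: "\<forall>l\<in>{1..M}. N l > 0"
    and Ntop: "N (Suc M) = 1"
    and kpos: "\<forall>l\<in>{1..M}. \<forall>p<N (Suc l). k l p \<ge> 1"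
    and ksum: "\<forall>l\<in>{1..M}. (\<Sum>p<N (Suc l). k l p) = N l"
    and Esym: "\<forall>l\<in>{1..M}. \<forall>p<N (Suc l). \<forall>i<k l p. \<forall>j<k l p. E l p i j = E l p j i"
    and Eirr: "\<forall>l\<in>{1..M}. \<forall>p<N (Suc l). \<forall>i<k l p. \<not> E l p i i"
    and Econn: "\<forall>l\<in>{1..M}. \<forall>p<N (Suc l). graph_connected (k l p) (E l p)"
    and apos: "\<forall>i<N 1. a i > 0"
    and cnonneg: "\<forall>l\<in>{1..<M}. \<forall>p<N (Suc l). \<forall>j<k l p. c l p j \<ge> 0"
    and csum: "\<forall>l\<in>{1..<M}. \<forall>p<N (Suc l). (\<Sum>j<k l p. c l p j) = 1"
  shows "(\<forall>l\<in>{1..M}. eigvals (Le N k E a l) = eigvals (Lmat N k E a c l)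
                       \<and> eigvals (Lmat N k E a c l) \<subseteq> \<real>)
     \<and> eigvals (Ltot N k E a c M) = {0} \<union> (\<Union>l\<in>{1..M}. eigvals (Le N k E a l) - {0})"
proof -
  interpret hier M N k E a c
    using M2 Npos Ntop kpos ksum Esym Eirr apos csum by unfold_locales
  show ?thesis using part1 part2 by blast
qed

end
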